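(* Let $S$ and $A$ be finite-dimensional quantum systems, $\rho^S_0$ a density matrix on $S$, $U$ a unitary on $S\otimes A$, $H^A$ a Hermitian operator on $A$, $\beta>0$, and $\Gamma^A=e^{-\beta H^A}/\operatorname{Tr}e^{-\beta H^A}$. Define the CPTP map $\mathcal E(X)=\operatorname{Tr}_S[U(\rho^S_0\otimes X)U^\dagger]$ on operators of $A$, with trace-dual $\mathcal E^\dagger$, and let $\langle Q\rangle=\operatorname{Tr}[\mathcal E(\Gamma^A)H^A]-\operatorname{Tr}[\Gamma^AH^A]$. Let $\gamma^A:=\mathcal E^\dagger(\Gamma^A)/\operatorname{Tr}[\mathcal E^\dagger(\Gamma^A)]$. Then $$\beta\langle Q\rangle\ \ge\ D(\Gamma^A\|\gamma^A)-\ln\operatorname{Tr}[\mathcal E^\dagger(\Gamma^A)].$$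
   Context: The trace-dual $\mathcal E^\dagger$ satisfies $\operatorname{Tr}[\mathcal E(X)Y]=\operatorname{Tr}[X\mathcal E^\dagger(Y)]$ for all $X,Y$. For density matrices $\rho,\sigma$, $D(\rho\|\sigma)=\operatorname{Tr}[\rho\ln\rho-\rho\ln\sigma]$ if $\operatorname{supp}\rho\subseteq\operatorname{supp}\sigma$ and $+\infty$ otherwise (Umegaki relative entropy). *)

theory Defs
  imports "HOL-Analysis.Analysis"
begin

text \<open>Finite-dimensional operators are complex square matrices indexed by a finite type.
  A composite system S (x) A is indexed by the product type 's \<times> 'a.\<close>

type_synonym 'n cmat = "complex^'n^'n"

definition adj :: "complex^'n::finite^'m::finite \<Rightarrow> complex^'m^'n" where
  "adj A = (\<chi> i j. cnj (A $ j $ i))"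

definition hermitian :: "'n::finite cmat \<Rightarrow> bool" where
  "hermitian A \<longleftrightarrow> adj A = A"

definition unitary :: "'n::finite cmat \<Rightarrow> bool" where
  "unitary U \<longleftrightarrow> adj U ** U = mat 1 \<and> U ** adj U = mat 1"

definition cinner :: "complex^'n::finite \<Rightarrow> complex^'n \<Rightarrow> complex" where
  "cinner v w = (\<Sum>i\<in>UNIV. cnj (v $ i) * w $ i)"

definition psd :: "'n::finite cmat \<Rightarrow> bool" where
  "psd A \<longleftrightarrow> hermitian A \<and> (\<forall>v. 0 \<le> Re (cinner v (A *v v)))"

definition density :: "'n::finite cmat \<Rightarrow> bool" where
  "density \<rho> \<longleftrightarrow> psd \<rho> \<and> trace \<rho> = 1"

definition cdiag :: "('n::finite \<Rightarrow> real) \<Rightarrow> 'n cmat" where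
  "cdiag d = (\<chi> i j. if i = j then complex_of_real (d i) else 0)"

definition mat_fun :: "(real \<Rightarrow> real) \<Rightarrow> 'n::finite cmat \<Rightarrow> 'n cmat" where
  "mat_fun f A = (SOME B. \<exists>V d. unitary V \<and> A = V ** cdiag d ** adj V
                               \<and> B = V ** cdiag (f \<circ> d) ** adj V)"

abbreviation mat_exp :: "'n::finite cmat \<Rightarrow> 'n cmat" where
  "mat_exp \<equiv> mat_fun exp"

text \<open>Matrix logarithm; on the kernel we use Isabelle's ln 0 = 0, i.e. the usual
  convention 0 ln 0 = 0 / logarithm taken on the support.\<close>
abbreviation mat_ln :: "'n::finite cmat \<Rightarrow> 'n cmat" where
  "mat_ln \<equiv> mat_fun ln"

definition cscale :: "complex \<Rightarrow> complex^'n::finite^'m::finite \<Rightarrow> complex^'n^'m" where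
  "cscale c M = (\<chi> i j. c * M $ i $ j)"

definition supp :: "'n::finite cmat \<Rightarrow> (complex^'n) set" where
  "supp A = range (\<lambda>v. A *v v)"

definition rel_entropy :: "'n::finite cmat \<Rightarrow> 'n cmat \<Rightarrow> ereal" where
  "rel_entropy \<rho> \<sigma> =
     (if supp \<rho> \<subseteq> supp \<sigma>
      then ereal (Re (trace (\<rho> ** mat_ln \<rho> - \<rho> ** mat_ln \<sigma>)))
      else \<infinity>)"

definition gibbs :: "real \<Rightarrow> 'n::finite cmat \<Rightarrow> 'n cmat" where
  "gibbs \<beta> H = cscale (1 / trace (mat_exp (cscale (- complex_of_real \<beta>) H)))
                       (mat_exp (cscale (- complex_of_real \<beta>) H))"

definition kron :: "'s::finite cmat \<Rightarrow> 'a::finite cmat \<Rightarrow> ('s \<times> 'a) cmat" where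
  "kron X Y = (\<chi> p q. X $ fst p $ fst q * Y $ snd p $ snd q)"

definition ptrace_S :: "('s::finite \<times> 'a::finite) cmat \<Rightarrow> 'a cmat" where
  "ptrace_S M = (\<chi> j l. \<Sum>i\<in>UNIV. M $ (i, j) $ (i, l))"

definition channel :: "'s::finite cmat \<Rightarrow> ('s \<times> 'a::finite) cmat \<Rightarrow> 'a cmat \<Rightarrow> 'a cmat" where
  "channel \<rho>0 U X = ptrace_S (U ** kron \<rho>0 X ** adj U)"

definition trace_dual :: "('n::finite cmat \<Rightarrow> 'm::finite cmat) \<Rightarrow> 'm cmat \<Rightarrow> 'n cmat" where
  "trace_dual E Y = (THE Z. \<forall>X. trace (E X ** Y) = trace (X ** Z))"

end

theory Submission
  imports Defs
begin

lemma adj_entry[simp]: "adj A $ i $ j = cnj (A $ j $ i)"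
  by (simp add: adj_def)

lemma adj_adj[simp]: "adj (adj A) = A"
  by (simp add: vec_eq_iff)

lemma adj_mult: "adj (A ** B) = adj B ** adj A"
  by (simp add: vec_eq_iff matrix_matrix_mult_def mult.commute)

lemma adj_add: "adj (A + B) = adj A + adj B"
  by (simp add: vec_eq_iff)

lemma adj_mat1[simp]: "adj (mat 1 :: complex^'n::finite^'n) = mat 1"
  by (simp add: vec_eq_iff mat_def)

lemma cscale_entry[simp]: "cscale c M $ i $ j = c * M $ i $ j"
  by (simp add: cscale_def)

lemma adj_cscale: "adj (cscale c A) = cscale (cnj c) (adj A)"
  by (simp add: vec_eq_iff)

lemma cdiag_entry: "cdiag d $ i $ j = (if i = j then complex_of_real (d i) else 0)"
  by (simp add: cdiag_def)

lemma adj_cdiag[simp]: "adj (cdiag d) = cdiag d"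
  by (simp add: vec_eq_iff cdiag_def)

lemma mult_cdiag_right: "(A ** cdiag d) $ i $ j = A $ i $ j * complex_of_real (d j)"
  by (simp add: matrix_matrix_mult_def cdiag_def mult_delta_right)

lemma mult_cdiag_left: "(cdiag d ** A) $ i $ j = complex_of_real (d i) * A $ i $ j"
  by (simp add: matrix_matrix_mult_def cdiag_def mult_delta_left)

lemma spec_entry: "(V ** cdiag d ** adj W) $ i $ j = (\<Sum>k\<in>UNIV. V $ i $ k * complex_of_real (d k) * cnj (W $ j $ k))"
  by (simp add: matrix_matrix_mult_def[of "V ** cdiag d"] mult_cdiag_right)

lemma cdiag_mult: "cdiag d ** cdiag e = cdiag (\<lambda>i. d i * e i)"
  by (simp add: vec_eq_iff mult_cdiag_left cdiag_entry)

lemma cdiag_one: "cdiag (\<lambda>i. 1) = mat 1"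
  by (simp add: vec_eq_iff cdiag_def mat_def)

lemma cscale_mult_left: "cscale c A ** B = cscale c (A ** B)"
  by (simp add: vec_eq_iff matrix_matrix_mult_def sum_distrib_left mult.assoc)

lemma cscale_mult_right: "A ** cscale c B = cscale c (A ** B)"
  by (simp add: vec_eq_iff matrix_matrix_mult_def sum_distrib_left algebra_simps)

lemma cscale_cdiag: "cscale (complex_of_real c) (cdiag d) = cdiag (\<lambda>i. c * d i)"
  by (simp add: vec_eq_iff cdiag_def)

lemma cscale_spec: "cscale (complex_of_real c) (V ** cdiag d ** W) = V ** cdiag (\<lambda>i. c * d i) ** W"
  by (simp add: cscale_mult_left cscale_mult_right cscale_cdiag[symmetric])

lemma cinner_add_right: "cinner x (y + z) = cinner x y + cinner x z"
  by (simp add: cinner_def algebra_simps sum.distrib)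
lemma cinner_add_left: "cinner (x + y) z = cinner x z + cinner y z"
  by (simp add: cinner_def algebra_simps sum.distrib)
lemma cinner_diff_right: "cinner x (y - z) = cinner x y - cinner x z"
  by (simp add: cinner_def algebra_simps sum_subtractf)
lemma cinner_diff_left: "cinner (x - y) z = cinner x z - cinner y z"
  by (simp add: cinner_def algebra_simps sum_subtractf)
lemma cinner_scale_right: "cinner x (c *s y) = c * cinner x y"
  by (simp add: cinner_def sum_distrib_left algebra_simps)
lemma cinner_scale_left: "cinner (c *s x) y = cnj c * cinner x y"
  by (simp add: cinner_def sum_distrib_left algebra_simps)
lemma cinner_commute: "cinner y x = cnj (cinner x y)"
  by (simp add: cinner_def mult.commute)
lemma cinner_zero_right[simp]: "cinner x 0 = 0" by (simp add: cinner_def)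
lemma cinner_zero_left[simp]: "cinner 0 x = 0" by (simp add: cinner_def)

lemma cinner_self: "cinner x x = complex_of_real ((norm x)\<^sup>2)"
proof -
  have "cinner x x = (\<Sum>i\<in>UNIV. complex_of_real ((cmod (x$i))\<^sup>2))"
    unfolding cinner_def by (intro sum.cong refl) (metis complex_norm_square mult.commute)
  also have "\<dots> = complex_of_real ((norm x)\<^sup>2)"
    by (simp add: norm_vec_def L2_set_def sum_nonneg)
  finally show ?thesis .
qed

lemma cinner_self_eq0: "cinner x x = 0 \<longleftrightarrow> x = 0"
  by (simp add: cinner_self)

lemma cinner_adj: "cinner x (A *v y) = cinner (adj A *v x) y"
proof -
  have "cinner x (A *v y) = (\<Sum>i\<in>UNIV. \<Sum>j\<in>UNIV. cnj (x$i) * A$i$j * y$j)"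
    by (simp add: cinner_def matrix_vector_mult_def sum_distrib_left mult.assoc)
  also have "\<dots> = (\<Sum>j\<in>UNIV. \<Sum>i\<in>UNIV. cnj (x$i) * A$i$j * y$j)"
    by (rule sum.swap)
  also have "\<dots> = cinner (adj A *v x) y"
    by (simp add: cinner_def matrix_vector_mult_def sum_distrib_left cnj_sum mult_ac)
  finally show ?thesis .
qed

lemma cinner_herm: "hermitian A \<Longrightarrow> cinner x (A *v y) = cinner (A *v x) y"
  by (metis cinner_adj hermitian_def)

lemma cinner_herm_real: "hermitian A \<Longrightarrow> cnj (cinner x (A *v x)) = cinner x (A *v x)"
  by (metis cinner_commute cinner_herm)

lemma cont_nth: "continuous_on S (\<lambda>x::complex^'n::finite. x $ k)"
  by (simp add: linear_continuous_on bounded_linear_vec_nth)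

lemma cont_cinner_r: "continuous_on S (\<lambda>x::complex^'n::finite. cinner w x)"
  unfolding cinner_def by (intro continuous_intros cont_nth)

lemma cont_quad: "continuous_on S (\<lambda>x::complex^'n::finite. Re (cinner x (A *v x)))"
  unfolding cinner_def matrix_vector_mult_def
  by (simp; intro continuous_intros cont_nth)

lemma norm_cscale_vec: "norm (c *s (x::complex^'n::finite)) = cmod c * norm x"
  by (simp add: norm_vec_def L2_set_right_distrib norm_mult)

lemma mv_scale: "A *v (c *s x) = c *s (A *v (x::complex^'n::finite))"
  by (simp add: vec_eq_iff matrix_vector_mult_def sum_distrib_left mult_ac)

lemma mv_add: "A *v (x + y) = A *v x + A *v (y::complex^'n::finite)"
  by (simp add: vec_eq_iff matrix_vector_mult_def sum.distrib algebra_simps)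

lemma mv_diff: "A *v (x - y) = A *v x - A *v (y::complex^'n::finite)"
  by (simp add: vec_eq_iff matrix_vector_mult_def sum_subtractf algebra_simps)

lemma exists_orth:
  fixes v :: "'n::finite \<Rightarrow> complex^'n"
  assumes "I \<noteq> UNIV"
  shows "\<exists>x. x \<noteq> 0 \<and> (\<forall>i\<in>I. cinner (v i) x = 0)"
proof (rule ccontr)
  assume H: "\<not> ?thesis"
  define M :: "complex^'n^'n" where "M = (\<chi> r k. if r \<in> I then cnj (v r $ k) else 0)"
  have Mv: "(M *v x) $ r = (if r \<in> I then cinner (v r) x else 0)" for x r
    by (simp add: M_def matrix_vector_mult_def cinner_def)
  have "\<forall>x. M *v x = 0 \<longrightarrow> x = 0"
  proof (intro allI impI)
    fix x assume "M *v x = 0"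
    then have "\<forall>i\<in>I. cinner (v i) x = 0" using Mv by (metis vec_eq_iff zero_index)
    then show "x = 0" using H by blast
  qed
  then obtain B where "B ** M = mat 1" using matrix_left_invertible_ker by blast
  then have MB: "M ** B = mat 1" using matrix_left_right_inverse by blast
  obtain j where j: "j \<notin> I" using assms by blast
  have "(M ** B) $ j $ j = 0" using j by (simp add: matrix_matrix_mult_def M_def)
  moreover have "(mat 1 :: complex^'n^'n) $ j $ j = 1" by (simp add: mat_def)
  ultimately show False using MB by simp
qed

lemma quad_form_neg_zero:
  fixes a b :: real
  assumes "\<And>t. a * t + b * t\<^sup>2 \<le> 0"
  shows "a = 0"
proof (rule ccontr)
  assume "a \<noteq> 0"
  define t where "t = a / (\<bar>b\<bar> + 1)"
  have pos: "\<bar>b\<bar> + 1 > 0" by simp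
  have at: "a = t * (\<bar>b\<bar> + 1)" unfolding t_def using pos by simp
  have "t \<noteq> 0" using \<open>a \<noteq> 0\<close> at by auto
  have "a * t + b * t\<^sup>2 = t\<^sup>2 * (\<bar>b\<bar> + 1 + b)"
    by (subst at) (simp add: power2_eq_square algebra_simps)
  moreover have "t\<^sup>2 * (\<bar>b\<bar> + 1 + b) > 0"
    using \<open>t \<noteq> 0\<close> by (intro mult_pos_pos) auto
  ultimately show False using assms[of t] by simp
qed

lemma cinner_scaleR_right: "cinner x (complex_of_real c *s y) = complex_of_real c * cinner x y"
  by (rule cinner_scale_right)

lemma eigen_step:
  fixes A :: "complex^'n::finite^'n" and v :: "'n \<Rightarrow> complex^'n"
  assumes herm: "hermitian A" and I: "I \<noteq> UNIV"
    and eig: "\<And>i. i \<in> I \<Longrightarrow> A *v v i = complex_of_real (d i) *s v i"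
  shows "\<exists>x l. norm x = 1 \<and> (\<forall>i\<in>I. cinner (v i) x = 0) \<and> A *v x = complex_of_real l *s x"
proof -
  define W where "W = {x. \<forall>i\<in>I. cinner (v i) x = 0}"
  define S where "S = {x. norm x = 1} \<inter> W"
  define f where "f x = Re (cinner x (A *v x))" for x
  have Wclosed: "closed W"
  proof -
    have "W = (\<Inter>i\<in>I. {x. cinner (v i) x = 0})" by (auto simp: W_def)
    moreover have "closed {x. cinner (v i) x = 0}" for i
      by (rule closed_Collect_eq) (auto intro: cont_cinner_r continuous_intros)
    ultimately show ?thesis by auto
  qed
  have Wadd: "x + y \<in> W" if "x \<in> W" "y \<in> W" for x y
    using that by (simp add: W_def cinner_add_right)
  have Wscale: "c *s x \<in> W" if "x \<in> W" for x c
    using that by (simp add: W_def cinner_scale_right)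
  have cS: "compact S" unfolding S_def
  proof (intro compact_Int_closed Wclosed)
    have "{x. norm x = 1} = sphere (0::complex^'n) 1" by (auto simp: sphere_def)
    then show "compact {x::complex^'n. norm x = 1}" by simp
  qed
  obtain x0 where x0: "x0 \<noteq> 0" "x0 \<in> W" using exists_orth[OF I, of v] unfolding W_def by blast
  define u where "u = complex_of_real (1 / norm x0) *s x0"
  have cm: "cmod (complex_of_real (1 / norm x0)) = 1 / norm x0" by (simp only: norm_of_real) simp
  have "norm u = 1" unfolding u_def norm_cscale_vec cm using x0(1) by simp
  moreover have "u \<in> W" unfolding u_def by (rule Wscale[OF x0(2)])
  ultimately have "u \<in> S" unfolding S_def by simp
  then have Sne: "S \<noteq> {}" by blast
  have cf: "continuous_on S f" unfolding f_def by (rule cont_quad)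
  obtain v0 where v0: "v0 \<in> S" and vmax: "\<And>y. y \<in> S \<Longrightarrow> f y \<le> f v0"
    using continuous_attains_sup[OF cS Sne cf] by metis
  have v0W: "v0 \<in> W" and nv0: "norm v0 = 1" using v0 by (auto simp: S_def)
  have fscale: "f (complex_of_real c *s x) = c\<^sup>2 * f x" for c x
    by (simp add: f_def mv_scale cinner_scale_left cinner_scale_right power2_eq_square)
  have f0: "f 0 = 0" by (simp add: f_def)
  have fle: "f x \<le> f v0 * (norm x)\<^sup>2" if "x \<in> W" for x
  proof (cases "x = 0")
    case True then show ?thesis by (simp add: f0)
  next
    case False
    define y where "y = complex_of_real (1 / norm x) *s x"
    have "cmod (complex_of_real (1 / norm x)) = 1 / norm x" by (simp only: norm_of_real) simp
    then have "norm y = 1" using False unfolding y_def by (simp only: norm_cscale_vec) simp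
    then have "y \<in> S" unfolding S_def using Wscale[OF that] y_def by simp
    then have "f y \<le> f v0" by (rule vmax)
    then have "(1 / norm x)\<^sup>2 * f x \<le> f v0" unfolding y_def fscale .
    then show ?thesis using False by (simp add: field_simps power2_eq_square)
  qed
  have R0: "Re (cinner w (A *v v0)) = 0" if wW: "w \<in> W" and wo: "cinner v0 w = 0" for w
  proof -
    have wo': "cinner w v0 = 0" using wo by (metis cinner_commute complex_cnj_zero)
    have v0v0: "cinner v0 v0 = 1" using nv0 by (simp add: cinner_self)
    have h1: "cinner v0 (A *v w) = cnj (cinner w (A *v v0))"
      by (metis cinner_commute cinner_herm herm)
    have "Re (cinner w (A *v v0)) * (2 * t) + (f w - f v0 * (norm w)\<^sup>2) * t\<^sup>2 \<le> 0" for t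
    proof -
      define x where "x = v0 + complex_of_real t *s w"
      have xW: "x \<in> W" unfolding x_def by (intro Wadd v0W Wscale wW)
      have "complex_of_real ((norm x)\<^sup>2) = cinner x x" by (simp add: cinner_self)
      also have "\<dots> = 1 + complex_of_real (t\<^sup>2 * (norm w)\<^sup>2)"
        unfolding x_def by (simp add: cinner_add_left cinner_add_right cinner_scale_left
            cinner_scale_right wo wo' v0v0 cinner_self[of w] power2_eq_square)
      finally have nx: "(norm x)\<^sup>2 = 1 + t\<^sup>2 * (norm w)\<^sup>2"
        by (metis of_real_1 of_real_add of_real_eq_iff)
      have "f x = f v0 + 2 * t * Re (cinner w (A *v v0)) + t\<^sup>2 * f w"
        unfolding x_def f_def
        by (simp add: mv_add mv_scale cinner_add_left cinner_add_right cinner_scale_left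
            cinner_scale_right h1 power2_eq_square algebra_simps)
      with fle[OF xW] nx show ?thesis by (simp add: algebra_simps)
    qed
    then have "2 * Re (cinner w (A *v v0)) = 0"
      by (intro quad_form_neg_zero[of _ "f w - f v0 * (norm w)\<^sup>2"]) (simp add: algebra_simps)
    then show ?thesis by simp
  qed
  have Z0: "cinner w (A *v v0) = 0" if wW: "w \<in> W" and wo: "cinner v0 w = 0" for w
  proof -
    have a: "Re (cinner w (A *v v0)) = 0" by (rule R0[OF wW wo])
    have "Re (cinner (\<i> *s w) (A *v v0)) = 0"
      by (rule R0) (auto simp: Wscale wW cinner_scale_right wo)
    then have b: "Im (cinner w (A *v v0)) = 0" by (simp add: cinner_scale_left)
    from a b show ?thesis by (simp add: complex_eq_iff)
  qed
  define c where "c = cinner v0 (A *v v0)"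
  have creal: "c = complex_of_real (Re c)"
  proof -
    have "cnj c = c" unfolding c_def by (rule cinner_herm_real[OF herm])
    then have "Im c = 0" by (simp add: complex_eq_iff)
    then show ?thesis by (simp add: complex_eq_iff)
  qed
  define w' where "w' = A *v v0 - c *s v0"
  have v0v0: "cinner v0 v0 = 1" using nv0 by (simp add: cinner_self)
  have w'W: "w' \<in> W" unfolding W_def mem_Collect_eq
  proof
    fix i assume i: "i \<in> I"
    have "cinner (v i) (A *v v0) = cinner (A *v v i) v0" by (rule cinner_herm[OF herm])
    also have "\<dots> = 0" using eig[OF i] v0W i by (simp add: cinner_scale_left W_def)
    finally show "cinner (v i) w' = 0" using v0W i
      by (simp add: w'_def cinner_diff_right cinner_scale_right W_def)
  qed
  have w'o: "cinner v0 w' = 0" unfolding w'_def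
    by (simp add: cinner_diff_right cinner_scale_right v0v0 c_def)
  have "cinner w' (A *v v0 - c *s v0) = cinner w' (A *v v0) - c * cinner w' v0"
    by (simp add: cinner_diff_right cinner_scale_right)
  then have "cinner w' w' = cinner w' (A *v v0) - c * cinner w' v0"
    unfolding w'_def[symmetric] .
  also have "\<dots> = 0" using Z0[OF w'W w'o] w'o by (metis cinner_commute complex_cnj_zero diff_self mult_zero_right)
  finally have "w' = 0" by (simp add: cinner_self_eq0)
  then have "A *v v0 = complex_of_real (Re c) *s v0" using creal by (simp add: w'_def)
  moreover have "\<forall>i\<in>I. cinner (v i) v0 = 0" using v0W by (simp add: W_def)
  ultimately show ?thesis using nv0 by blast
qed

lemma spectral_vecs:
  fixes A :: "complex^'n::finite^'n"
  assumes herm: "hermitian A"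
  shows "\<exists>(v::'n \<Rightarrow> complex^'n) d. (\<forall>i j. cinner (v i) (v j) = (if i = j then 1 else 0)) \<and>
               (\<forall>i. A *v v i = complex_of_real (d i) *s v i)"
proof -
  have main: "\<forall>m. m \<le> CARD('n) \<longrightarrow> (\<exists>(I::'n set) (v::'n \<Rightarrow> complex^'n) d. card I = m \<and>
      (\<forall>i\<in>I. \<forall>j\<in>I. cinner (v i) (v j) = (if i = j then 1 else 0)) \<and>
      (\<forall>i\<in>I. A *v v i = complex_of_real (d i) *s v i))"
  proof (intro allI)
    fix m show "m \<le> CARD('n) \<longrightarrow> (\<exists>(I::'n set) (v::'n \<Rightarrow> complex^'n) d. card I = m \<and>
      (\<forall>i\<in>I. \<forall>j\<in>I. cinner (v i) (v j) = (if i = j then 1 else 0)) \<and>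
      (\<forall>i\<in>I. A *v v i = complex_of_real (d i) *s v i))"
    proof (induction m)
      case 0
      show ?case by (intro impI exI[of _ "{}"]) simp
    next
      case (Suc m)
      show ?case
      proof
        assume sm: "Suc m \<le> CARD('n)"
        obtain I :: "'n set" and v :: "'n \<Rightarrow> complex^'n" and d where I: "card I = m"
          and orth: "\<forall>i\<in>I. \<forall>j\<in>I. cinner (v i) (v j) = (if i = j then 1 else 0)"
          and eig: "\<forall>i\<in>I. A *v v i = complex_of_real (d i) *s v i"
          using Suc.IH[rule_format, OF Suc_leD[OF sm]] by blast
        have "I \<noteq> UNIV" using I sm by auto
        then obtain j where j: "j \<notin> I" by blast
        obtain x l where x: "norm x = 1" "\<forall>i\<in>I. cinner (v i) x = 0"
            "A *v x = complex_of_real l *s x"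
          using eigen_step[OF herm \<open>I \<noteq> UNIV\<close>, of v d] eig by blast
        have xx: "cinner x x = 1" using x(1) by (simp add: cinner_self)
        have xi: "cinner x (v i) = 0" if "i \<in> I" for i
          using x(2) that by (metis cinner_commute complex_cnj_zero)
        define v' where "v' = v(j := x)"
        define d' where "d' = d(j := l)"
        have "card (insert j I) = Suc m" using j I by (simp add: card_insert_if)
        moreover have "\<forall>i\<in>insert j I. \<forall>k\<in>insert j I. cinner (v' i) (v' k) = (if i = k then 1 else 0)"
          using orth x(2) xi xx j by (auto simp: v'_def)
        moreover have "\<forall>i\<in>insert j I. A *v v' i = complex_of_real (d' i) *s v' i"
          using eig x(3) j by (auto simp: v'_def d'_def)
        ultimately show "\<exists>(I::'n set) (v::'n \<Rightarrow> complex^'n) d. card I = Suc m \<and>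
          (\<forall>i\<in>I. \<forall>j\<in>I. cinner (v i) (v j) = (if i = j then 1 else 0)) \<and>
          (\<forall>i\<in>I. A *v v i = complex_of_real (d i) *s v i)" by blast
      qed
    qed
  qed
  obtain I :: "'n set" and v :: "'n \<Rightarrow> complex^'n" and d where I: "card I = CARD('n)"
    and orth: "\<forall>i\<in>I. \<forall>j\<in>I. cinner (v i) (v j) = (if i = j then 1 else 0)"
    and eig: "\<forall>i\<in>I. A *v v i = complex_of_real (d i) *s v i" using main[rule_format, OF order_refl] by blast
  have "I = UNIV" using I by (simp add: card_eq_UNIV_imp_eq_UNIV)
  then show ?thesis using orth eig by (intro exI[of _ v] exI[of _ d]) auto
qed

lemma spectral:
  fixes A :: "complex^'n::finite^'n"
  assumes herm: "hermitian A"
  shows "\<exists>V d. unitary V \<and> A = V ** cdiag d ** adj V"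
proof -
  obtain v :: "'n \<Rightarrow> complex^'n" and d where orth: "\<And>i j. cinner (v i) (v j) = (if i = j then 1 else 0)"
    and eig: "\<And>i. A *v v i = complex_of_real (d i) *s v i"
    using spectral_vecs[OF herm] by blast
  define V :: "complex^'n^'n" where "V = (\<chi> r c. v c $ r)"
  have VV: "adj V ** V = mat 1"
  proof -
    have "(adj V ** V) $ i $ j = cinner (v i) (v j)" for i j
      by (simp add: V_def matrix_matrix_mult_def cinner_def)
    then show ?thesis using orth by (simp add: vec_eq_iff mat_def)
  qed
  then have VV': "V ** adj V = mat 1" using matrix_left_right_inverse by blast
  have AV: "A ** V = V ** cdiag d"
  proof -
    have "(A ** V) $ r $ c = (A *v v c) $ r" for r c
      by (simp add: V_def matrix_matrix_mult_def matrix_vector_mult_def)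
    then show ?thesis by (simp add: vec_eq_iff mult_cdiag_right eig V_def mult.commute)
  qed
  have "A = A ** (V ** adj V)" using VV' by simp
  also have "\<dots> = V ** cdiag d ** adj V" by (simp add: matrix_mul_assoc AV)
  finally show ?thesis using VV VV' unfolding unitary_def by blast
qed

lemma unitaryD1: "unitary V \<Longrightarrow> adj V ** V = mat 1" by (simp add: unitary_def)
lemma unitaryD2: "unitary V \<Longrightarrow> V ** adj V = mat 1" by (simp add: unitary_def)

lemma adjV_mv_nth: "(adj W *v x) $ k = cinner (column k W) x"
  by (simp add: matrix_vector_mult_def cinner_def column_def)

lemma mm_column: "(M ** N) $ i $ j = (M *v column j N) $ i"
  by (simp add: matrix_matrix_mult_def matrix_vector_mult_def column_def)

lemma cinner_cdiag: "cinner a (cdiag f *v b) = (\<Sum>k\<in>UNIV. cnj (a $ k) * complex_of_real (f k) * b $ k)"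
  by (simp add: cinner_def matrix_vector_mult_def cdiag_def mult_delta_left mult.assoc)

lemma bf_spec: "cinner x ((W ** cdiag f ** adj W) *v y) =
   (\<Sum>k\<in>UNIV. complex_of_real (f k) * cnj (cinner (column k W) x) * cinner (column k W) y)"
proof -
  have "cinner x ((W ** cdiag f ** adj W) *v y) = cinner x (W *v (cdiag f *v (adj W *v y)))"
    by (simp add: matrix_vector_mul_assoc matrix_mul_assoc)
  also have "\<dots> = cinner (adj W *v x) (cdiag f *v (adj W *v y))" by (rule cinner_adj)
  also have "\<dots> = (\<Sum>k\<in>UNIV. complex_of_real (f k) * cnj (cinner (column k W) x) * cinner (column k W) y)"
    by (simp add: cinner_cdiag adjV_mv_nth mult_ac)
  finally show ?thesis .
qed

lemma qf_spec: "cinner x ((W ** cdiag f ** adj W) *v x) =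
   complex_of_real (\<Sum>k\<in>UNIV. f k * (cmod (cinner (column k W) x))\<^sup>2)"
proof -
  have "cnj z * z = complex_of_real ((cmod z)\<^sup>2)" for z
    by (metis complex_norm_square mult.commute)
  then show ?thesis by (simp add: bf_spec mult.assoc)
qed

lemma trace_spec: "trace (V ** cdiag d ** adj V ** X) =
   (\<Sum>a\<in>UNIV. complex_of_real (d a) * cinner (column a V) (X *v column a V))"
proof -
  have "trace (V ** cdiag d ** adj V ** X) = trace (V ** (cdiag d ** (adj V ** X)))"
    by (simp add: matrix_mul_assoc)
  also have "\<dots> = trace ((cdiag d ** (adj V ** X)) ** V)" by (rule trace_mul_sym)
  also have "\<dots> = trace (cdiag d ** (adj V ** X ** V))" by (simp add: matrix_mul_assoc)
  also have "\<dots> = (\<Sum>a\<in>UNIV. complex_of_real (d a) * (adj V ** X ** V) $ a $ a)"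
    by (simp add: trace_def mult_cdiag_left)
  also have "\<dots> = (\<Sum>a\<in>UNIV. complex_of_real (d a) * cinner (column a V) (X *v column a V))"
  proof -
    have "(adj V ** X ** V) $ a $ a = cinner (column a V) (X *v column a V)" for a
    proof -
      have "(adj V ** X ** V) $ a $ a = (adj V *v (X *v column a V)) $ a"
        by (simp add: mm_column matrix_vector_mul_assoc)
      then show ?thesis by (simp add: adjV_mv_nth)
    qed
    then show ?thesis by simp
  qed
  finally show ?thesis .
qed

lemma mat_fun_eq:
  assumes U: "unitary V" and A: "A = V ** cdiag d ** adj V"
  shows "mat_fun f A = V ** cdiag (f \<circ> d) ** adj V"
proof -
  let ?P = "\<lambda>B. \<exists>V d. unitary V \<and> A = V ** cdiag d ** adj V \<and> B = V ** cdiag (f \<circ> d) ** adj V"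
  have "?P (V ** cdiag (f \<circ> d) ** adj V)" using U A by blast
  then have "?P (mat_fun f A)" unfolding mat_fun_def by (rule someI)
  then obtain V' d' where U': "unitary V'" and A': "A = V' ** cdiag d' ** adj V'"
    and B: "mat_fun f A = V' ** cdiag (f \<circ> d') ** adj V'" by blast
  define X where "X = adj V' ** V"
  have "X ** cdiag d = adj V' ** (V ** cdiag d ** adj V) ** V"
    unfolding X_def using unitaryD1[OF U]
    by (metis matrix_mul_assoc matrix_mul_rid)
  also have "\<dots> = adj V' ** (V' ** cdiag d' ** adj V') ** V" using A A' by simp
  also have "\<dots> = cdiag d' ** X"
    unfolding X_def using unitaryD1[OF U']
    by (metis matrix_mul_assoc matrix_mul_lid)
  finally have XD: "X ** cdiag d = cdiag d' ** X" .
  have XfD: "X ** cdiag (f \<circ> d) = cdiag (f \<circ> d') ** X"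
  proof -
    have "X $ i $ j * complex_of_real (f (d j)) = complex_of_real (f (d' i)) * X $ i $ j" for i j
    proof -
      have "X $ i $ j * complex_of_real (d j) = complex_of_real (d' i) * X $ i $ j"
        using XD by (metis mult_cdiag_left mult_cdiag_right)
      then have "X $ i $ j = 0 \<or> d j = d' i" by (auto simp: mult.commute)
      then show ?thesis by auto
    qed
    then show ?thesis by (simp add: vec_eq_iff mult_cdiag_left mult_cdiag_right)
  qed
  have "V' ** cdiag (f \<circ> d') ** adj V' = V' ** (cdiag (f \<circ> d') ** X) ** adj V"
    unfolding X_def using unitaryD2[OF U]
    by (metis matrix_mul_assoc matrix_mul_rid)
  also have "\<dots> = V' ** (X ** cdiag (f \<circ> d)) ** adj V" by (simp add: XfD)
  also have "\<dots> = V ** cdiag (f \<circ> d) ** adj V"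
    unfolding X_def using unitaryD2[OF U']
    by (metis matrix_mul_assoc matrix_mul_lid)
  finally show ?thesis using B by simp
qed

lemma matrix_add_rdistrib': "((A + B) ** C) = (A ** C) + (B ** (C::'a::semiring_1^'p^'n))"
  by (simp add: vec_eq_iff matrix_matrix_mult_def sum.distrib distrib_right)

lemma mat_sum_left: "A ** sum f S = (\<Sum>k\<in>S. A ** f k)"
  by (induction S rule: infinite_finite_induct) (auto simp: matrix_add_ldistrib)

lemma mat_sum_right: "sum f S ** A = (\<Sum>k\<in>S. f k ** A)"
  by (induction S rule: infinite_finite_induct) (auto simp: matrix_add_rdistrib')

lemma sum_mv: "sum f S *v x = (\<Sum>k\<in>S. f k *v x)"
  by (induction S rule: infinite_finite_induct) (auto simp: matrix_vector_mult_add_rdistrib)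

lemma trace_sum: "trace (sum f S :: complex^'n::finite^'n) = (\<Sum>k\<in>S. trace (f k))"
  by (induction S rule: infinite_finite_induct) (auto simp: trace_add trace_0[unfolded mat_0])

lemma cinner_sum_right: "cinner x (sum f S) = (\<Sum>k\<in>S. cinner x (f k))"
  by (induction S rule: infinite_finite_induct) (auto simp: cinner_add_right)

lemma adj_zero[simp]: "adj 0 = 0" by (simp add: vec_eq_iff)

lemma adj_sum: "adj (sum f S) = (\<Sum>k\<in>S. adj (f k))"
  by (induction S rule: infinite_finite_induct) (auto simp: adj_add)


lemma col_orth: "unitary V \<Longrightarrow> cinner (column k V) (column m V) = (if k = m then 1 else 0)"
proof -
  assume "unitary V"
  then have "(adj V ** V) $ k $ m = (if k = m then 1 else 0)" by (simp add: unitary_def mat_def)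
  then show ?thesis by (simp add: mm_column adjV_mv_nth)
qed

lemma sum_if_conj: "(\<Sum>k\<in>(UNIV::'n::finite set). if P \<and> k = a then c k else 0) = (if P then c a else 0)"
  by (cases P) auto

lemma trace_determines:
  fixes Z1 Z2 :: "complex^'n::finite^'n"
  assumes "\<And>X. trace (X ** Z1) = trace (X ** Z2)"
  shows "Z1 = Z2"
proof -
  have "Z1 $ a $ b = Z2 $ a $ b" for a b
  proof -
    define X :: "complex^'n^'n" where "X = (\<chi> r c. if r = b \<and> c = a then 1 else 0)"
    have "trace (X ** Z) = Z $ a $ b" for Z :: "complex^'n^'n"
      by (simp add: X_def trace_def matrix_matrix_mult_def if_distrib if_distribR
          sum_if_conj cong: if_cong)
    then show ?thesis using assms[of X] by simp
  qed
  then show ?thesis by (simp add: vec_eq_iff)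
qed

definition Rop :: "'s::finite \<Rightarrow> complex^('s \<times> 'a::finite)^'a" where
  "Rop i = (\<chi> j p. if p = (i, j) then 1 else 0)"

definition Lop :: "('s::finite \<Rightarrow> real) \<Rightarrow> complex^'s^'s \<Rightarrow> 's \<Rightarrow> complex^'a::finite^('s \<times> 'a)" where
  "Lop r V0 m = (\<chi> p b. if snd p = b then complex_of_real (sqrt (r m)) * V0 $ fst p $ m else 0)"

lemma ptrace_Rop: "ptrace_S M = (\<Sum>i\<in>UNIV. Rop i ** M ** adj (Rop i))"
proof -
  have "(Rop i ** M ** adj (Rop i)) $ j $ l = M $ (i, j) $ (i, l)" for i j l
    by (simp add: Rop_def matrix_matrix_mult_def if_distrib if_distribR sum.delta cong: if_cong)
  then show ?thesis by (simp add: vec_eq_iff ptrace_S_def)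
qed

lemma Lop_entry:
  assumes r: "r m \<ge> 0"
  shows "(Lop r V0 m ** X ** adj (Lop r V0 m)) $ p $ q =
    V0 $ fst p $ m * complex_of_real (r m) * cnj (V0 $ fst q $ m) * X $ snd p $ snd q"
proof -
  have "(Lop r V0 m ** X ** adj (Lop r V0 m)) $ p $ q =
     complex_of_real (sqrt (r m)) * V0 $ fst p $ m * X $ snd p $ snd q *
       (complex_of_real (sqrt (r m)) * cnj (V0 $ fst q $ m))"
    by (simp add: Lop_def matrix_matrix_mult_def if_distrib if_distribR sum.delta cong: if_cong)
  also have "\<dots> = V0 $ fst p $ m * complex_of_real (sqrt (r m) * sqrt (r m)) * cnj (V0 $ fst q $ m) * X $ snd p $ snd q"
    by (simp only: of_real_mult mult_ac)
  also have "sqrt (r m) * sqrt (r m) = r m" using r by simp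
  finally show ?thesis .
qed

lemma kron_Lop:
  assumes rho: "\<rho>0 = V0 ** cdiag r ** adj V0" and r: "\<And>m. r m \<ge> 0"
  shows "kron \<rho>0 X = (\<Sum>m\<in>UNIV. Lop r V0 m ** X ** adj (Lop r V0 m))"
proof -
  have "kron \<rho>0 X $ p $ q = (\<Sum>m\<in>UNIV. (Lop r V0 m ** X ** adj (Lop r V0 m)) $ p $ q)" for p q
    by (simp add: kron_def Lop_entry[OF r] rho spec_entry sum_distrib_right)
  then show ?thesis by (simp add: vec_eq_iff)
qed

definition Kraus :: "('s::finite \<Rightarrow> real) \<Rightarrow> complex^'s^'s \<Rightarrow> complex^('s \<times> 'a::finite)^('s \<times> 'a)
     \<Rightarrow> 's \<times> 's \<Rightarrow> complex^'a^'a" where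
  "Kraus r V0 U k = Rop (snd k) ** U ** Lop r V0 (fst k)"

lemma channel_Kraus:
  assumes rho: "\<rho>0 = V0 ** cdiag r ** adj V0" and r: "\<And>m. r m \<ge> 0"
  shows "channel \<rho>0 U X = (\<Sum>k\<in>UNIV. Kraus r V0 U k ** X ** adj (Kraus r V0 U k))"
proof -
  have "channel \<rho>0 U X = (\<Sum>i\<in>UNIV. Rop i ** (U ** (\<Sum>m\<in>UNIV. Lop r V0 m ** X ** adj (Lop r V0 m)) ** adj U) ** adj (Rop i))"
    unfolding channel_def ptrace_Rop kron_Lop[OF rho r] ..
  also have "\<dots> = (\<Sum>i\<in>UNIV. \<Sum>m\<in>UNIV. Kraus r V0 U (m, i) ** X ** adj (Kraus r V0 U (m, i)))"
  proof (rule sum.cong[OF refl])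
    fix i
    show "Rop i ** (U ** (\<Sum>m\<in>UNIV. Lop r V0 m ** X ** adj (Lop r V0 m)) ** adj U) ** adj (Rop i) =
      (\<Sum>m\<in>UNIV. Kraus r V0 U (m, i) ** X ** adj (Kraus r V0 U (m, i)))"
      by (simp add: mat_sum_left mat_sum_right Kraus_def adj_mult matrix_mul_assoc)
  qed
  also have "\<dots> = (\<Sum>m\<in>UNIV. \<Sum>i\<in>UNIV. Kraus r V0 U (m, i) ** X ** adj (Kraus r V0 U (m, i)))"
    by (rule sum.swap)
  also have "\<dots> = (\<Sum>k\<in>UNIV. Kraus r V0 U k ** X ** adj (Kraus r V0 U k))"
    by (simp add: sum.cartesian_product)
  finally show ?thesis .
qed

lemma trace_ptrace: "trace (ptrace_S M) = trace (M :: complex^('s::finite \<times> 'a::finite)^('s \<times> 'a))"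
proof -
  have "trace (ptrace_S M) = (\<Sum>j\<in>UNIV. \<Sum>i\<in>UNIV. M $ (i, j) $ (i, j))"
    by (simp add: trace_def ptrace_S_def)
  also have "\<dots> = (\<Sum>i\<in>UNIV. \<Sum>j\<in>UNIV. M $ (i, j) $ (i, j))" by (rule sum.swap)
  also have "\<dots> = (\<Sum>p\<in>UNIV \<times> UNIV. M $ p $ p)"
    by (simp add: sum.cartesian_product)
  also have "\<dots> = trace M" by (simp add: trace_def)
  finally show ?thesis .
qed

lemma trace_kron: "trace (kron A B) = trace A * trace B"
proof -
  have "trace (kron A B) = (\<Sum>p\<in>UNIV \<times> UNIV. A $ fst p $ fst p * B $ snd p $ snd p)"
    by (simp add: trace_def kron_def)
  also have "\<dots> = (\<Sum>i\<in>UNIV. \<Sum>j\<in>UNIV. A $ i $ i * B $ j $ j)"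
    by (simp add: sum.cartesian_product case_prod_beta)
  also have "\<dots> = trace A * trace B" by (simp add: trace_def sum_product)
  finally show ?thesis .
qed

lemma trace_conj_unitary: "unitary U \<Longrightarrow> trace (U ** M ** adj U) = trace M"
proof -
  assume u: "unitary U"
  have "trace (U ** M ** adj U) = trace (U ** (M ** adj U))" by (simp add: matrix_mul_assoc)
  also have "\<dots> = trace ((M ** adj U) ** U)" by (rule trace_mul_sym)
  also have "\<dots> = trace M" using unitaryD1[OF u] by (simp flip: matrix_mul_assoc)
  finally show ?thesis .
qed

lemma trace_channel:
  assumes "trace \<rho>0 = 1" "unitary U"
  shows "trace (channel \<rho>0 U X) = trace X"
  using assms by (simp add: channel_def trace_ptrace trace_conj_unitary trace_kron)

lemma duality_Kraus:
  fixes K :: "'k \<Rightarrow> complex^'a::finite^'a"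
  shows "trace ((\<Sum>k\<in>S. K k ** X ** adj (K k)) ** Y) = trace (X ** (\<Sum>k\<in>S. adj (K k) ** Y ** K k))"
proof -
  have "trace ((\<Sum>k\<in>S. K k ** X ** adj (K k)) ** Y) = (\<Sum>k\<in>S. trace (K k ** (X ** adj (K k) ** Y)))"
    by (simp add: mat_sum_right trace_sum matrix_mul_assoc)
  also have "\<dots> = (\<Sum>k\<in>S. trace ((X ** adj (K k) ** Y) ** K k))"
    by (simp add: trace_mul_sym[of "K _"])
  also have "\<dots> = trace (X ** (\<Sum>k\<in>S. adj (K k) ** Y ** K k))"
    by (simp add: mat_sum_left trace_sum matrix_mul_assoc)
  finally show ?thesis .
qed

lemma dual_Kraus:
  assumes rho: "\<rho>0 = V0 ** cdiag r ** adj V0" and r: "\<And>m. r m \<ge> 0"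
  shows "trace_dual (channel \<rho>0 U) Y = (\<Sum>k\<in>UNIV. adj (Kraus r V0 U k) ** Y ** Kraus r V0 U k)"
  unfolding trace_dual_def
proof (rule the_equality)
  show "\<forall>X. trace (channel \<rho>0 U X ** Y) = trace (X ** (\<Sum>k\<in>UNIV. adj (Kraus r V0 U k) ** Y ** Kraus r V0 U k))"
    by (simp add: channel_Kraus[OF rho r] duality_Kraus)
  fix Z assume "\<forall>X. trace (channel \<rho>0 U X ** Y) = trace (X ** Z)"
  then show "Z = (\<Sum>k\<in>UNIV. adj (Kraus r V0 U k) ** Y ** Kraus r V0 U k)"
    by (intro trace_determines) (simp add: channel_Kraus[OF rho r] duality_Kraus)
qed

lemma Kraus_unital:
  assumes rho: "\<rho>0 = V0 ** cdiag r ** adj V0" and r: "\<And>m. r m \<ge> 0"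
    and tr: "trace \<rho>0 = 1" and u: "unitary U"
  shows "(\<Sum>k\<in>UNIV. adj (Kraus r V0 U k) ** Kraus r V0 U k) = mat 1"
proof (rule trace_determines)
  fix X
  have "trace (X ** (\<Sum>k\<in>UNIV. adj (Kraus r V0 U k) ** Kraus r V0 U k)) =
        trace (X ** (\<Sum>k\<in>UNIV. adj (Kraus r V0 U k) ** mat 1 ** Kraus r V0 U k))" by simp
  also have "\<dots> = trace (channel \<rho>0 U X ** mat 1)"
    by (simp only: channel_Kraus[OF rho r] duality_Kraus)
  also have "\<dots> = trace X" using trace_channel[OF tr u] by simp
  finally show "trace (X ** (\<Sum>k\<in>UNIV. adj (Kraus r V0 U k) ** Kraus r V0 U k)) = trace (X ** mat 1)"
    by simp
qed

lemma ln_sum_deriv: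
  fixes c q :: "'i \<Rightarrow> real"
  assumes "\<And>j. j \<in> J \<Longrightarrow> q j > 0" and "T \<ge> 0"
  shows "((\<lambda>T. \<Sum>j\<in>J. c j * ln (q j + T)) has_real_derivative (\<Sum>j\<in>J. c j / (q j + T))) (at T)"
proof (rule DERIV_sum)
  fix j assume j: "j \<in> J"
  have pos: "q j + T > 0" using assms(1)[OF j] assms(2) by simp
  have "((\<lambda>T. ln (q j + T)) has_real_derivative (1 / (q j + T)) * 1) (at T)"
    by (rule DERIV_chain2[where f=ln and g="\<lambda>T. q j + T", OF DERIV_ln_divide[OF pos]])
      (auto intro!: derivative_eq_intros)
  then have "((\<lambda>T. c j * ln (q j + T)) has_real_derivative c j * (1 / (q j + T))) (at T)"
    by (intro DERIV_cmult) simp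
  then show "((\<lambda>T. c j * ln (q j + T)) has_real_derivative c j / (q j + T)) (at T)" by simp
qed

lemma log_ineq:
  fixes \<alpha> \<mu> :: "'i \<Rightarrow> real" and \<beta> p :: "'j \<Rightarrow> real"
  assumes fI: "finite I" and fJ: "finite J"
    and a0: "\<And>i. i \<in> I \<Longrightarrow> \<alpha> i \<ge> 0" and a1: "(\<Sum>i\<in>I. \<alpha> i) = 1"
    and b0: "\<And>j. j \<in> J \<Longrightarrow> \<beta> j \<ge> 0" and b1: "(\<Sum>j\<in>J. \<beta> j) = 1"
    and mu: "\<And>i. i \<in> I \<Longrightarrow> \<mu> i > 0" and p: "\<And>j. j \<in> J \<Longrightarrow> p j > 0"
    and key: "\<And>t. t \<ge> 0 \<Longrightarrow> (\<Sum>i\<in>I. \<alpha> i / (\<mu> i + t)) \<le> (\<Sum>j\<in>J. \<beta> j / (p j + t))"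
  shows "(\<Sum>j\<in>J. \<beta> j * ln (p j)) \<le> (\<Sum>i\<in>I. \<alpha> i * ln (\<mu> i))"
proof -
  define g where "g T = (\<Sum>j\<in>J. \<beta> j * ln (p j + T)) - (\<Sum>i\<in>I. \<alpha> i * ln (\<mu> i + T))" for T
  have mono: "g 0 \<le> g T" if T: "T \<ge> 0" for T
  proof (rule DERIV_nonneg_imp_nondecreasing[OF T])
    fix x :: real assume x: "0 \<le> x" "x \<le> T"
    have "(g has_real_derivative (\<Sum>j\<in>J. \<beta> j / (p j + x)) - (\<Sum>i\<in>I. \<alpha> i / (\<mu> i + x))) (at x)"
      unfolding g_def by (intro DERIV_diff ln_sum_deriv p mu x(1))
    moreover have "(\<Sum>j\<in>J. \<beta> j / (p j + x)) - (\<Sum>i\<in>I. \<alpha> i / (\<mu> i + x)) \<ge> 0"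
      using key[OF x(1)] by simp
    ultimately show "\<exists>y. (g has_real_derivative y) (at x) \<and> 0 \<le> y" by blast
  qed
  define P where "P = (\<Sum>j\<in>J. \<beta> j * p j)"
  have P0: "P \<ge> 0" unfolding P_def using b0 p by (intro sum_nonneg) (simp add: less_imp_le)
  have gT: "g T \<le> P / T" if T: "T > 0" for T
  proof -
    have A: "(\<Sum>j\<in>J. \<beta> j * ln (p j + T)) \<le> (\<Sum>j\<in>J. \<beta> j * (ln T + p j / T))"
    proof (rule sum_mono)
      fix j assume j: "j \<in> J"
      have "ln (p j + T) = ln T + ln ((p j + T) / T)" using T p[OF j] by (simp add: ln_div)
      also have "ln ((p j + T) / T) \<le> (p j + T) / T - 1"
        using T p[OF j] by (intro ln_le_minus_one) simp
      also have "(p j + T) / T - 1 = p j / T" using T by (simp add: field_simps)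
      finally show "\<beta> j * ln (p j + T) \<le> \<beta> j * (ln T + p j / T)"
        using b0[OF j] by (simp add: mult_left_mono)
    qed
    also have "\<dots> = (\<Sum>j\<in>J. \<beta> j * ln T) + (\<Sum>j\<in>J. \<beta> j * (p j / T))"
      by (simp add: distrib_left sum.distrib)
    also have "(\<Sum>j\<in>J. \<beta> j * ln T) = ln T" by (simp add: sum_distrib_right[symmetric] b1)
    also have "(\<Sum>j\<in>J. \<beta> j * (p j / T)) = P / T" by (simp add: P_def sum_divide_distrib)
    finally have A': "(\<Sum>j\<in>J. \<beta> j * ln (p j + T)) \<le> ln T + P / T" .
    have "(\<Sum>i\<in>I. \<alpha> i * ln T) \<le> (\<Sum>i\<in>I. \<alpha> i * ln (\<mu> i + T))"
    proof (rule sum_mono)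
      fix i assume i: "i \<in> I"
      show "\<alpha> i * ln T \<le> \<alpha> i * ln (\<mu> i + T)"
        using a0[OF i] mu[OF i] T by (intro mult_left_mono) auto
    qed
    moreover have "(\<Sum>i\<in>I. \<alpha> i * ln T) = ln T" by (simp add: sum_distrib_right[symmetric] a1)
    ultimately show ?thesis using A' unfolding g_def by linarith
  qed
  have "g 0 \<le> 0"
  proof (rule ccontr)
    assume "\<not> g 0 \<le> 0"
    then have g0: "g 0 > 0" by simp
    define T where "T = (P + 1) / g 0"
    have T: "T > 0" using g0 P0 by (simp add: T_def)
    have "g 0 \<le> P / T" using mono[of T] gT[OF T] T by simp
    also have "P / T = P * g 0 / (P + 1)" using g0 P0 by (simp add: T_def)
    also have "\<dots> < g 0" using g0 P0 by (simp add: field_simps)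
    finally show False by simp
  qed
  then show ?thesis by (simp add: g_def)
qed

lemma cinner_unitary_expand:
  assumes u: "unitary V"
  shows "cinner x y = (\<Sum>j\<in>UNIV. cnj (cinner (column j V) x) * cinner (column j V) y)"
proof -
  have "V ** cdiag (\<lambda>j. 1) ** adj V = mat 1" using unitaryD2[OF u] by (simp add: cdiag_one)
  then have "cinner x y = cinner x ((V ** cdiag (\<lambda>j. 1) ** adj V) *v y)" by simp
  also have "\<dots> = (\<Sum>j\<in>UNIV. cnj (cinner (column j V) x) * cinner (column j V) y)"
    by (simp add: bf_spec)
  finally show ?thesis .
qed

lemma sum_pair: "sum f (UNIV :: ('a::finite \<times> 'b::finite) set) = (\<Sum>k\<in>UNIV. \<Sum>j\<in>UNIV. f (k, j))"
  by (subst sum.cartesian_product) simp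

lemma cs_spec:
  fixes a b :: "'k::finite \<Rightarrow> complex^'n::finite"
  assumes u: "unitary V" and y: "\<And>j. y j > 0"
  shows "(cmod (\<Sum>k\<in>UNIV. cinner (a k) (b k)))\<^sup>2 \<le>
    Re (\<Sum>k\<in>UNIV. cinner (a k) ((V ** cdiag (\<lambda>j. 1 / y j) ** adj V) *v a k)) *
    Re (\<Sum>k\<in>UNIV. cinner (b k) ((V ** cdiag y ** adj V) *v b k))"
proof -
  define \<alpha> where "\<alpha> k j = cinner (column j V) (a k)" for k j
  define \<beta> where "\<beta> k j = cinner (column j V) (b k)" for k j
  define F where "F kj = cmod (\<alpha> (fst kj) (snd kj)) / sqrt (y (snd kj))" for kj
  define G where "G kj = sqrt (y (snd kj)) * cmod (\<beta> (fst kj) (snd kj))" for kj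
  have "cmod (\<Sum>k\<in>UNIV. cinner (a k) (b k)) = cmod (\<Sum>k\<in>UNIV. \<Sum>j\<in>UNIV. cnj (\<alpha> k j) * \<beta> k j)"
    unfolding \<alpha>_def \<beta>_def
    by (intro arg_cong[where f=cmod] sum.cong refl) (rule cinner_unitary_expand[OF u])
  also have "\<dots> \<le> (\<Sum>k\<in>UNIV. \<Sum>j\<in>UNIV. cmod (\<alpha> k j) * cmod (\<beta> k j))"
    by (rule order_trans[OF norm_sum sum_mono], rule order_trans[OF norm_sum])
       (simp add: norm_mult)
  also have "\<dots> = (\<Sum>kj\<in>UNIV. F kj * G kj)"
  proof -
    have "F kj * G kj = cmod (\<alpha> (fst kj) (snd kj)) * cmod (\<beta> (fst kj) (snd kj))" for kj
      unfolding F_def G_def using y[of "snd kj"] by (simp add: field_simps)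
    then show ?thesis by (simp add: sum_pair)
  qed
  finally have h1: "cmod (\<Sum>k\<in>UNIV. cinner (a k) (b k)) \<le> (\<Sum>kj\<in>UNIV. F kj * G kj)" .
  have h2: "(\<Sum>kj\<in>UNIV. F kj * G kj)\<^sup>2 \<le> (\<Sum>kj\<in>UNIV. (F kj)\<^sup>2) * (\<Sum>kj\<in>UNIV. (G kj)\<^sup>2)"
    by (rule Cauchy_Schwarz_ineq_sum)
  have h3: "(\<Sum>kj\<in>UNIV. (F kj)\<^sup>2) = Re (\<Sum>k\<in>UNIV. cinner (a k) ((V ** cdiag (\<lambda>j. 1 / y j) ** adj V) *v a k))"
  proof -
    have "(F kj)\<^sup>2 = 1 / y (snd kj) * (cmod (\<alpha> (fst kj) (snd kj)))\<^sup>2" for kj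
      unfolding F_def using y[of "snd kj"] by (simp add: power_divide)
    then show ?thesis
      by (simp add: qf_spec \<alpha>_def Re_sum sum_pair)
  qed
  have h4: "(\<Sum>kj\<in>UNIV. (G kj)\<^sup>2) = Re (\<Sum>k\<in>UNIV. cinner (b k) ((V ** cdiag y ** adj V) *v b k))"
  proof -
    have "(G kj)\<^sup>2 = y (snd kj) * (cmod (\<beta> (fst kj) (snd kj)))\<^sup>2" for kj
      unfolding G_def using y[of "snd kj"] by (simp add: power_mult_distrib)
    then show ?thesis
      by (simp add: qf_spec \<beta>_def Re_sum sum_pair)
  qed
  have "(cmod (\<Sum>k\<in>UNIV. cinner (a k) (b k)))\<^sup>2 \<le> (\<Sum>kj\<in>UNIV. F kj * G kj)\<^sup>2"
    using h1 by (intro power_mono) auto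
  also note h2
  finally show ?thesis unfolding h3 h4 .
qed

lemma Phi_form:
  "cinner x ((\<Sum>k\<in>S. adj (K k) ** Y ** K k) *v y) = (\<Sum>k\<in>S. cinner (K k *v x) (Y *v (K k *v y)))"
proof -
  have "cinner x ((adj (K k) ** Y ** K k) *v y) = cinner (K k *v x) (Y *v (K k *v y))" for k
  proof -
    have "cinner x ((adj (K k) ** Y ** K k) *v y) = cinner x (adj (K k) *v (Y *v (K k *v y)))"
      by (simp add: matrix_vector_mul_assoc matrix_mul_assoc)
    also have "\<dots> = cinner (K k *v x) (Y *v (K k *v y))" by (simp add: cinner_adj)
    finally show ?thesis .
  qed
  then show ?thesis by (simp add: sum_mv cinner_sum_right)
qed

lemma spec_shift:
  fixes V :: "complex^'n::finite^'n"
  assumes u: "unitary V"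
  shows "V ** cdiag (\<lambda>k. d k + t) ** adj V = V ** cdiag d ** adj V + cscale (complex_of_real t) (mat 1)"
proof -
  have VV: "(\<Sum>k\<in>UNIV. V $ i $ k * cnj (V $ j $ k)) = (mat 1 :: complex^'n^'n) $ i $ j" for i j
  proof -
    have "(V ** adj V) $ i $ j = (\<Sum>k\<in>UNIV. V $ i $ k * cnj (V $ j $ k))"
      by (simp add: matrix_matrix_mult_def)
    then show ?thesis using unitaryD2[OF u] by simp
  qed
  have "(V ** cdiag (\<lambda>k. d k + t) ** adj V) $ i $ j =
      (V ** cdiag d ** adj V) $ i $ j + complex_of_real t * (\<Sum>k\<in>UNIV. V $ i $ k * cnj (V $ j $ k))" for i j
    by (simp add: spec_entry algebra_simps sum.distrib sum_distrib_left)
  then show ?thesis by (simp add: vec_eq_iff VV)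
qed

lemma cscale_sum: "(\<Sum>k\<in>S. cscale c (f k)) = cscale c (sum f S)"
  by (simp add: vec_eq_iff sum_distrib_left)

lemma cscale_add: "cscale c (A + B) = cscale c A + cscale c B"
  by (simp add: vec_eq_iff algebra_simps)

lemma Phi_shift:
  assumes un: "(\<Sum>k\<in>S. adj (K k) ** K k) = mat 1"
  shows "(\<Sum>k\<in>S. adj (K k) ** (A + cscale c (mat 1)) ** K k) = (\<Sum>k\<in>S. adj (K k) ** A ** K k) + cscale c (mat 1)"
proof -
  have "adj (K k) ** (A + cscale c (mat 1)) ** K k = adj (K k) ** A ** K k + cscale c (adj (K k) ** K k)" for k
    by (simp add: matrix_add_ldistrib matrix_add_rdistrib' cscale_mult_left cscale_mult_right)
  then show ?thesis by (simp add: sum.distrib cscale_sum un)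
qed

lemma spec_mult:
  assumes u: "unitary W"
  shows "(W ** cdiag f ** adj W) ** (W ** cdiag g ** adj W) = W ** cdiag (\<lambda>k. f k * g k) ** adj W"
proof -
  have "(W ** cdiag f ** adj W) ** (W ** cdiag g ** adj W) = W ** cdiag f ** (adj W ** W) ** cdiag g ** adj W"
    by (simp add: matrix_mul_assoc)
  also have "\<dots> = W ** (cdiag f ** cdiag g) ** adj W" using unitaryD1[OF u] by (simp add: matrix_mul_assoc)
  finally show ?thesis by (simp add: cdiag_mult)
qed

lemma resolvent_ineq:
  fixes K :: "'k::finite \<Rightarrow> complex^'a::finite^'a"
  assumes un: "(\<Sum>k\<in>UNIV. adj (K k) ** K k) = mat 1"
    and uV: "unitary V" and p: "\<And>b. p b > 0"
    and uW: "unitary W" and mu: "\<And>j. \<mu> j > 0"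
    and M: "(\<Sum>k\<in>UNIV. adj (K k) ** (V ** cdiag p ** adj V) ** K k) = W ** cdiag \<mu> ** adj W"
    and t: "t \<ge> 0"
  shows "(\<Sum>j\<in>UNIV. (cmod (cinner (column j W) u))\<^sup>2 / (\<mu> j + t)) \<le>
         (\<Sum>k\<in>UNIV. \<Sum>b\<in>UNIV. (cmod (cinner (column b V) (K k *v u)))\<^sup>2 / (p b + t))"
proof -
  define Y where "Y = V ** cdiag (\<lambda>b. p b + t) ** adj V"
  define Yinv where "Yinv = V ** cdiag (\<lambda>b. 1 / (p b + t)) ** adj V"
  define N where "N = W ** cdiag (\<lambda>j. \<mu> j + t) ** adj W"
  define Ninv where "Ninv = W ** cdiag (\<lambda>j. 1 / (\<mu> j + t)) ** adj W"
  define z where "z = Ninv *v u"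
  have pt: "p b + t > 0" for b using p[of b] t by simp
  have mt: "\<mu> j + t > 0" for j using mu[of j] t by simp
  have NN: "N ** Ninv = mat 1"
  proof -
    have "N ** Ninv = W ** cdiag (\<lambda>j. 1) ** adj W"
      unfolding N_def Ninv_def spec_mult[OF uW] using mt by (simp add: less_imp_neq[symmetric])
    then show ?thesis using unitaryD2[OF uW] by (simp add: cdiag_one)
  qed
  have PhiY: "(\<Sum>k\<in>UNIV. adj (K k) ** Y ** K k) = N"
    unfolding Y_def N_def spec_shift[OF uV] spec_shift[OF uW] Phi_shift[OF un] M ..
  have Nz: "N *v z = u" unfolding z_def by (simp add: matrix_vector_mul_assoc NN)
  define q where "q = (\<Sum>j\<in>UNIV. 1 / (\<mu> j + t) * (cmod (cinner (column j W) u))\<^sup>2)"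
  have q0: "q \<ge> 0" unfolding q_def using mt by (intro sum_nonneg mult_nonneg_nonneg) (auto simp: less_imp_le)
  have uz: "cinner u z = complex_of_real q" unfolding z_def Ninv_def q_def by (rule qf_spec)
  have zu: "cinner z u = complex_of_real q" using uz by (metis cinner_commute complex_cnj_complex_of_real)
  have s1: "(\<Sum>k\<in>UNIV. cinner (K k *v u) (K k *v z)) = complex_of_real q"
  proof -
    have "(\<Sum>k\<in>UNIV. cinner (K k *v u) (K k *v z)) = (\<Sum>k\<in>UNIV. cinner (K k *v u) (mat 1 *v (K k *v z)))"
      by simp
    also have "\<dots> = cinner u ((\<Sum>k\<in>UNIV. adj (K k) ** mat 1 ** K k) *v z)"
      by (rule Phi_form[symmetric])
    also have "\<dots> = cinner u z" using un by simp
    finally show ?thesis using uz by simp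
  qed
  have s2: "Re (\<Sum>k\<in>UNIV. cinner (K k *v z) (Y *v (K k *v z))) = q"
  proof -
    have "(\<Sum>k\<in>UNIV. cinner (K k *v z) (Y *v (K k *v z))) = cinner z (N *v z)"
      by (simp add: Phi_form[symmetric] PhiY)
    then show ?thesis using Nz zu by simp
  qed
  define r where "r = Re (\<Sum>k\<in>UNIV. cinner (K k *v u) (Yinv *v (K k *v u)))"
  have r_eq: "r = (\<Sum>k\<in>UNIV. \<Sum>b\<in>UNIV. (cmod (cinner (column b V) (K k *v u)))\<^sup>2 / (p b + t))"
    unfolding r_def Yinv_def by (simp add: qf_spec Re_sum)
  have r0: "r \<ge> 0" unfolding r_eq using pt by (intro sum_nonneg divide_nonneg_pos) auto
  have cs: "(cmod (\<Sum>k\<in>UNIV. cinner (K k *v u) (K k *v z)))\<^sup>2 \<le> r * q"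
    unfolding r_def Yinv_def s2[symmetric] Y_def using cs_spec[where y="\<lambda>b. p b + t" and a="\<lambda>k. K k *v u" and b="\<lambda>k. K k *v z", OF uV pt]
    by simp
  then have "q\<^sup>2 \<le> r * q" using s1 q0 by simp
  then have "q \<le> r" using q0 r0
    by (cases "q = 0") (auto simp: power2_eq_square mult_le_cancel_right)
  moreover have "q = (\<Sum>j\<in>UNIV. (cmod (cinner (column j W) u))\<^sup>2 / (\<mu> j + t))"
    unfolding q_def by simp
  ultimately show ?thesis using r_eq by simp
qed

lemma trace_spec1:
  assumes u: "unitary V"
  shows "trace (V ** cdiag d ** adj V) = complex_of_real (sum d UNIV)"
proof -
  have "trace (V ** cdiag d ** adj V) = trace (V ** cdiag d ** adj V ** mat 1)" by simp
  also have "\<dots> = (\<Sum>a\<in>UNIV. complex_of_real (d a))"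
    unfolding trace_spec by (simp add: col_orth[OF u])
  finally show ?thesis by simp
qed

lemma diag_quad:
  assumes u: "unitary V"
  shows "cinner (column a V) ((V ** cdiag f ** adj V) *v column a V) = complex_of_real (f a)"
proof -
  have "(cmod (cinner (column k V) (column a V)))\<^sup>2 = (if k = a then 1 else 0)" for k
    by (cases "k = a") (auto simp: col_orth[OF u])
  then have "(\<Sum>k\<in>UNIV. f k * (cmod (cinner (column k V) (column a V)))\<^sup>2) = f a"
    by (simp only: mult_delta_right mult_1_right) simp
  then show ?thesis by (simp only: qf_spec)
qed

lemma trace_spec_spec:
  assumes u: "unitary V"
  shows "trace (V ** cdiag p ** adj V ** (V ** cdiag f ** adj V)) = complex_of_real (\<Sum>a\<in>UNIV. p a * f a)"
  by (simp add: trace_spec diag_quad[OF u])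

lemma parseval:
  assumes u: "unitary V"
  shows "(\<Sum>b\<in>UNIV. (cmod (cinner (column b V) y))\<^sup>2) = Re (cinner y y)"
proof -
  have "V ** cdiag (\<lambda>j. 1) ** adj V = mat 1" using unitaryD2[OF u] by (simp add: cdiag_one)
  then have "cinner y y = cinner y ((V ** cdiag (\<lambda>j. 1) ** adj V) *v y)" by simp
  then show ?thesis by (simp add: qf_spec)
qed

lemma herm_spec: "hermitian (V ** cdiag d ** adj V)"
  by (simp add: hermitian_def adj_mult matrix_mul_assoc)

lemma herm_Phi: "hermitian Y \<Longrightarrow> hermitian (\<Sum>k\<in>S. adj (K k) ** Y ** K k)"
  by (simp add: hermitian_def adj_sum adj_mult matrix_mul_assoc)

lemma spec_eigen_re:
  assumes u: "unitary V" and A: "A = V ** cdiag d ** adj V"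
  shows "d m = Re (cinner (column m V) (A *v column m V))"
  using diag_quad[OF u, of m d] A by simp

theorem mainTheorem4:
  fixes \<rho>0 :: "complex^'s::finite^'s"
    and U :: "complex^('s \<times> 'a::finite)^('s \<times> 'a)"
    and H :: "complex^'a^'a"
    and \<beta> :: real
  assumes "density \<rho>0"
    and "unitary U"
    and "hermitian H"
    and "\<beta> > 0"
  shows "let \<Gamma> = gibbs \<beta> H;
             E = channel \<rho>0 U;
             Ed = trace_dual E;
             Q = Re (trace (E \<Gamma> ** H) - trace (\<Gamma> ** H));
             \<gamma> = cscale (1 / trace (Ed \<Gamma>)) (Ed \<Gamma>)
         in ereal (\<beta> * Q) \<ge> rel_entropy \<Gamma> \<gamma> - ereal (ln (Re (trace (Ed \<Gamma>))))"
proof -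
  have herm0: "hermitian \<rho>0" using assms(1) by (simp add: density_def psd_def)
  have tr0: "trace \<rho>0 = 1" using assms(1) by (simp add: density_def)
  obtain V0 r where uV0: "unitary V0" and rho: "\<rho>0 = V0 ** cdiag r ** adj V0"
    using spectral[OF herm0] by blast
  have r0: "r m \<ge> 0" for m
  proof -
    have "r m = Re (cinner (column m V0) (\<rho>0 *v column m V0))" by (rule spec_eigen_re[OF uV0 rho])
    moreover have "0 \<le> Re (cinner (column m V0) (\<rho>0 *v column m V0))"
      using assms(1) by (simp add: density_def psd_def)
    ultimately show ?thesis by simp
  qed
  define K where "K = Kraus r V0 U"
  have chan: "\<And>X. channel \<rho>0 U X = (\<Sum>k\<in>UNIV. K k ** X ** adj (K k))"
    by (simp add: K_def channel_Kraus[OF rho r0])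
  have dual: "\<And>Y. trace_dual (channel \<rho>0 U) Y = (\<Sum>k\<in>UNIV. adj (K k) ** Y ** K k)"
    by (simp add: K_def dual_Kraus[OF rho r0])
  have un: "(\<Sum>k\<in>UNIV. adj (K k) ** K k) = mat 1"
    unfolding K_def by (rule Kraus_unital[OF rho r0 tr0 assms(2)])
  obtain V h where uV: "unitary V" and Hs: "H = V ** cdiag h ** adj V"
    using spectral[OF assms(3)] by blast
  define Z where "Z = (\<Sum>a\<in>UNIV. exp (- \<beta> * h a))"
  define p where "p a = exp (- \<beta> * h a) / Z" for a
  have Z0: "Z > 0" unfolding Z_def by (intro sum_pos) auto
  have p0: "p a > 0" for a unfolding p_def using Z0 by simp
  have p1: "(\<Sum>a\<in>UNIV. p a) = 1" unfolding p_def using Z0 by (simp add: sum_divide_distrib[symmetric] Z_def)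
  have lnp: "ln (p a) = - \<beta> * h a - ln Z" for a unfolding p_def using Z0 by (simp add: ln_div)
  have Gam: "gibbs \<beta> H = V ** cdiag p ** adj V"
  proof -
    have e1: "cscale (- complex_of_real \<beta>) H = V ** cdiag (\<lambda>i. - \<beta> * h i) ** adj V"
      using cscale_spec[of "- \<beta>" V h "adj V"] Hs by simp
    have e2: "mat_exp (cscale (- complex_of_real \<beta>) H) = V ** cdiag (exp \<circ> (\<lambda>i. - \<beta> * h i)) ** adj V"
      unfolding e1 by (rule mat_fun_eq[OF uV refl])
    have e3: "trace (V ** cdiag (exp \<circ> (\<lambda>i. - \<beta> * h i)) ** adj V) = complex_of_real Z"
      by (simp add: trace_spec1[OF uV] Z_def comp_def)
    have e4: "(1 :: complex) / complex_of_real Z = complex_of_real (1 / Z)" by simp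
    have e5: "(\<lambda>i. 1 / Z * (exp \<circ> (\<lambda>i. - \<beta> * h i)) i) = p" by (simp add: fun_eq_iff p_def)
    show ?thesis unfolding gibbs_def e2 e3 e4 cscale_spec e5 ..
  qed
  define \<Gamma> where "\<Gamma> = V ** cdiag p ** adj V"
  have lnGam: "mat_ln \<Gamma> = V ** cdiag (ln \<circ> p) ** adj V" unfolding \<Gamma>_def by (rule mat_fun_eq[OF uV refl])
  define M where "M = (\<Sum>k\<in>UNIV. adj (K k) ** \<Gamma> ** K k)"
  have hermM: "hermitian M" unfolding M_def \<Gamma>_def by (intro herm_Phi herm_spec)
  obtain W \<mu> where uW: "unitary W" and Ms: "M = W ** cdiag \<mu> ** adj W"
    using spectral[OF hermM] by blast
  have Kiso: "(\<Sum>k\<in>UNIV. cinner (K k *v x) (K k *v y)) = cinner x y" for x y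
    using Phi_form[where Y = "mat 1" and S = UNIV and K = K, of x y] un by simp
  have mu0: "\<mu> j > 0" for j
  proof -
    define x where "x = column j W"
    have xx: "cinner x x = 1" unfolding x_def by (simp add: col_orth[OF uW])
    have mj: "\<mu> j = Re (cinner x (M *v x))" unfolding x_def by (rule spec_eigen_re[OF uW Ms])
    have S: "Re (cinner x (M *v x)) = (\<Sum>k\<in>UNIV. \<Sum>b\<in>UNIV. p b * (cmod (cinner (column b V) (K k *v x)))\<^sup>2)"
      unfolding M_def Phi_form \<Gamma>_def by (simp add: qf_spec Re_sum)
    have nn: "0 \<le> p b * (cmod (cinner (column b V) (K k *v x)))\<^sup>2" for b k
      using p0[of b] by simp
    show ?thesis
    proof (rule ccontr)
      assume "\<not> \<mu> j > 0"
      then have "(\<Sum>k\<in>UNIV. \<Sum>b\<in>UNIV. p b * (cmod (cinner (column b V) (K k *v x)))\<^sup>2) \<le> 0"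
        using mj S by simp
      moreover have "(\<Sum>k\<in>UNIV. \<Sum>b\<in>UNIV. p b * (cmod (cinner (column b V) (K k *v x)))\<^sup>2) \<ge> 0"
        using nn by (intro sum_nonneg) auto
      ultimately have "(\<Sum>k\<in>UNIV. \<Sum>b\<in>UNIV. p b * (cmod (cinner (column b V) (K k *v x)))\<^sup>2) = 0"
        by simp
      then have z1: "\<forall>k\<in>UNIV. (\<Sum>b\<in>UNIV. p b * (cmod (cinner (column b V) (K k *v x)))\<^sup>2) = 0"
        using nn by (subst (asm) sum_nonneg_eq_0_iff) (auto intro!: sum_nonneg)
      have z2: "cinner (column b V) (K k *v x) = 0" for b k
      proof -
        have "(\<Sum>b\<in>UNIV. p b * (cmod (cinner (column b V) (K k *v x)))\<^sup>2) = 0"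
          using z1 by blast
        then have "p b * (cmod (cinner (column b V) (K k *v x)))\<^sup>2 = 0"
          using nn by (subst (asm) sum_nonneg_eq_0_iff) auto
        then show ?thesis using p0[of b] by simp
      qed
      have "cinner (K k *v x) (K k *v x) = 0" for k
        using cinner_unitary_expand[OF uV, of "K k *v x" "K k *v x"] z2 by simp
      then have "cinner x x = 0" using Kiso[of x x] by simp
      then show False using xx by simp
    qed
  qed
  define T where "T = (\<Sum>j\<in>UNIV. \<mu> j)"
  have T0: "T > 0" unfolding T_def using mu0 by (intro sum_pos) auto
  have trM: "trace M = complex_of_real T" unfolding Ms T_def by (rule trace_spec1[OF uW])
  define \<gamma> where "\<gamma> = W ** cdiag (\<lambda>j. \<mu> j / T) ** adj W"
  have gam: "cscale (1 / trace M) M = \<gamma>"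
  proof -
    have e4: "(1 :: complex) / complex_of_real T = complex_of_real (1 / T)" by simp
    have e5: "(\<lambda>i. 1 / T * \<mu> i) = (\<lambda>j. \<mu> j / T)" by (simp add: fun_eq_iff)
    show ?thesis unfolding trM unfolding Ms \<gamma>_def e4 cscale_spec e5 ..
  qed
  have lngam: "mat_ln \<gamma> = W ** cdiag (ln \<circ> (\<lambda>j. \<mu> j / T)) ** adj W"
    unfolding \<gamma>_def by (rule mat_fun_eq[OF uW refl])
  have suppg: "supp \<gamma> = UNIV"
  proof -
    define G where "G = W ** cdiag (\<lambda>j. T / \<mu> j) ** adj W"
    have "\<gamma> ** G = W ** cdiag (\<lambda>j. 1) ** adj W"
      unfolding \<gamma>_def G_def spec_mult[OF uW] using mu0 T0 by (simp add: less_imp_neq[symmetric])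
    then have gG: "\<gamma> ** G = mat 1" using unitaryD2[OF uW] by (simp add: cdiag_one)
    have "y \<in> supp \<gamma>" for y
    proof -
      have "y = \<gamma> *v (G *v y)" by (simp add: matrix_vector_mul_assoc gG)
      then show ?thesis unfolding supp_def by blast
    qed
    then show ?thesis by auto
  qed
  have RE: "rel_entropy \<Gamma> \<gamma> = ereal (Re (trace (\<Gamma> ** mat_ln \<Gamma>)) - Re (trace (\<Gamma> ** mat_ln \<gamma>)))"
    by (simp add: rel_entropy_def suppg trace_sub)
  define C where "C a b = (\<Sum>k\<in>UNIV. (cmod (cinner (column b V) (K k *v column a V)))\<^sup>2)" for a b
  define m where "m a j = (cmod (cinner (column j W) (column a V)))\<^sup>2" for a j
  have C1: "(\<Sum>b\<in>UNIV. C a b) = 1" for a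
  proof -
    have "(\<Sum>b\<in>UNIV. C a b) = (\<Sum>k\<in>UNIV. \<Sum>b\<in>UNIV. (cmod (cinner (column b V) (K k *v column a V)))\<^sup>2)"
      unfolding C_def by (rule sum.swap)
    also have "\<dots> = (\<Sum>k\<in>UNIV. Re (cinner (K k *v column a V) (K k *v column a V)))"
      by (simp add: parseval[OF uV])
    also have "\<dots> = Re (cinner (column a V) (column a V))" by (simp add: Re_sum[symmetric] Kiso)
    also have "\<dots> = 1" by (simp add: col_orth[OF uV])
    finally show ?thesis .
  qed
  have m1: "(\<Sum>j\<in>UNIV. m a j) = 1" for a
    unfolding m_def by (simp add: parseval[OF uW] col_orth[OF uV])
  have M': "(\<Sum>k\<in>UNIV. adj (K k) ** (V ** cdiag p ** adj V) ** K k) = W ** cdiag \<mu> ** adj W"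
    using Ms unfolding M_def \<Gamma>_def .
  have key: "(\<Sum>b\<in>UNIV. C a b * ln (p b)) \<le> (\<Sum>j\<in>UNIV. m a j * ln (\<mu> j))" for a
  proof (rule log_ineq)
    show "m a j \<ge> 0" for j by (simp add: m_def)
    show "C a b \<ge> 0" for b by (simp add: C_def sum_nonneg)
    show "(\<Sum>j\<in>UNIV. m a j) = 1" by (rule m1)
    show "(\<Sum>b\<in>UNIV. C a b) = 1" by (rule C1)
    show "\<mu> j > 0" for j by (rule mu0)
    show "p b > 0" for b by (rule p0)
    fix t :: real assume t: "t \<ge> 0"
    have "(\<Sum>j\<in>UNIV. m a j / (\<mu> j + t)) \<le>
         (\<Sum>k\<in>UNIV. \<Sum>b\<in>UNIV. (cmod (cinner (column b V) (K k *v column a V)))\<^sup>2 / (p b + t))"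
      unfolding m_def by (rule resolvent_ineq[OF un uV p0 uW mu0 M' t])
    also have "\<dots> = (\<Sum>b\<in>UNIV. \<Sum>k\<in>UNIV. (cmod (cinner (column b V) (K k *v column a V)))\<^sup>2 / (p b + t))"
      by (rule sum.swap)
    also have "\<dots> = (\<Sum>b\<in>UNIV. C a b / (p b + t))"
      unfolding C_def by (simp add: sum_divide_distrib)
    finally show "(\<Sum>j\<in>UNIV. m a j / (\<mu> j + t)) \<le> (\<Sum>b\<in>UNIV. C a b / (p b + t))" .
  qed (auto)
  have t1: "Re (trace (\<Gamma> ** mat_ln \<Gamma>)) = (\<Sum>a\<in>UNIV. p a * ln (p a))"
    unfolding lnGam unfolding \<Gamma>_def trace_spec_spec[OF uV] by simp
  have t2: "Re (trace (\<Gamma> ** mat_ln \<gamma>)) = (\<Sum>a\<in>UNIV. p a * (\<Sum>j\<in>UNIV. m a j * ln (\<mu> j / T)))"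
    unfolding lngam \<Gamma>_def trace_spec qf_spec m_def by (simp add: Re_sum mult_ac)
  have t3: "Re (trace (\<Gamma> ** H)) = (\<Sum>a\<in>UNIV. p a * h a)"
    unfolding Hs \<Gamma>_def trace_spec_spec[OF uV] by simp
  have t4: "Re (trace (channel \<rho>0 U \<Gamma> ** H)) = (\<Sum>a\<in>UNIV. p a * (\<Sum>b\<in>UNIV. C a b * h b))"
  proof -
    have "trace (channel \<rho>0 U \<Gamma> ** H) = trace (\<Gamma> ** (\<Sum>k\<in>UNIV. adj (K k) ** H ** K k))"
      unfolding chan by (rule duality_Kraus)
    also have "\<dots> = (\<Sum>a\<in>UNIV. complex_of_real (p a) *
        (\<Sum>k\<in>UNIV. cinner (K k *v column a V) (H *v (K k *v column a V))))"
      unfolding \<Gamma>_def trace_spec Phi_form ..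
    also have "\<dots> = (\<Sum>a\<in>UNIV. complex_of_real (p a) * (\<Sum>k\<in>UNIV. complex_of_real
        (\<Sum>b\<in>UNIV. h b * (cmod (cinner (column b V) (K k *v column a V)))\<^sup>2)))"
      unfolding Hs qf_spec ..
    finally have "Re (trace (channel \<rho>0 U \<Gamma> ** H)) =
        (\<Sum>a\<in>UNIV. p a * (\<Sum>k\<in>UNIV. \<Sum>b\<in>UNIV. h b * (cmod (cinner (column b V) (K k *v column a V)))\<^sup>2))"
      by (simp add: Re_sum)
    also have "\<dots> = (\<Sum>a\<in>UNIV. p a * (\<Sum>b\<in>UNIV. C a b * h b))"
    proof (rule sum.cong[OF refl])
      fix a
      have "(\<Sum>k\<in>UNIV. \<Sum>b\<in>UNIV. h b * (cmod (cinner (column b V) (K k *v column a V)))\<^sup>2) =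
          (\<Sum>b\<in>UNIV. \<Sum>k\<in>UNIV. h b * (cmod (cinner (column b V) (K k *v column a V)))\<^sup>2)"
        by (rule sum.swap)
      also have "\<dots> = (\<Sum>b\<in>UNIV. C a b * h b)"
        unfolding C_def by (simp add: sum_distrib_left sum_distrib_right mult.commute)
      finally show "p a * (\<Sum>k\<in>UNIV. \<Sum>b\<in>UNIV. h b * (cmod (cinner (column b V) (K k *v column a V)))\<^sup>2) =
          p a * (\<Sum>b\<in>UNIV. C a b * h b)" by simp
    qed
    finally show ?thesis .
  qed
  have final: "\<beta> * (Re (trace (channel \<rho>0 U \<Gamma> ** H)) - Re (trace (\<Gamma> ** H))) \<ge>
      Re (trace (\<Gamma> ** mat_ln \<Gamma>)) - Re (trace (\<Gamma> ** mat_ln \<gamma>)) - ln T"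
  proof -
    define Lp where "Lp a = (\<Sum>b\<in>UNIV. C a b * ln (p b))" for a
    define Lm where "Lm a = (\<Sum>j\<in>UNIV. m a j * ln (\<mu> j))" for a
    have hb: "\<beta> * h b = - ln (p b) - ln Z" for b using lnp[of b] by simp
    have A: "\<beta> * (\<Sum>b\<in>UNIV. C a b * h b) = - Lp a - ln Z" for a
    proof -
      have "\<beta> * (\<Sum>b\<in>UNIV. C a b * h b) = (\<Sum>b\<in>UNIV. C a b * (\<beta> * h b))"
        by (simp add: sum_distrib_left mult_ac)
      also have "\<dots> = (\<Sum>b\<in>UNIV. - (C a b * ln (p b)) - ln Z * C a b)"
        by (simp add: hb algebra_simps)
      also have "\<dots> = - Lp a - ln Z * (\<Sum>b\<in>UNIV. C a b)"
        by (simp add: sum_subtractf Lp_def sum_negf sum_distrib_left)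
      finally show ?thesis using C1[of a] by simp
    qed
    have G: "(\<Sum>j\<in>UNIV. m a j * ln (\<mu> j / T)) = Lm a - ln T" for a
    proof -
      have "(\<Sum>j\<in>UNIV. m a j * ln (\<mu> j / T)) = (\<Sum>j\<in>UNIV. m a j * ln (\<mu> j) - ln T * m a j)"
      proof (intro sum.cong refl)
        fix j
        have "\<mu> j \<noteq> 0" "T \<noteq> 0" using mu0[of j] T0 by auto
        then show "m a j * ln (\<mu> j / T) = m a j * ln (\<mu> j) - ln T * m a j"
          by (simp add: ln_div algebra_simps)
      qed
      also have "\<dots> = Lm a - ln T * (\<Sum>j\<in>UNIV. m a j)"
        by (simp add: sum_subtractf Lm_def sum_distrib_left)
      finally show ?thesis using m1[of a] by simp
    qed
    have L: "\<beta> * (Re (trace (channel \<rho>0 U \<Gamma> ** H)) - Re (trace (\<Gamma> ** H))) =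
        (\<Sum>a\<in>UNIV. p a * (\<beta> * (\<Sum>b\<in>UNIV. C a b * h b) - \<beta> * h a))"
      unfolding t3 t4 by (simp add: sum_distrib_left sum_subtractf[symmetric] algebra_simps)
    also have "\<dots> = (\<Sum>a\<in>UNIV. p a * (ln (p a) - Lp a))"
      by (intro sum.cong refl) (simp add: A hb)
    finally have L': "\<beta> * (Re (trace (channel \<rho>0 U \<Gamma> ** H)) - Re (trace (\<Gamma> ** H))) =
        (\<Sum>a\<in>UNIV. p a * (ln (p a) - Lp a))" .
    have R: "Re (trace (\<Gamma> ** mat_ln \<Gamma>)) - Re (trace (\<Gamma> ** mat_ln \<gamma>)) - ln T =
        (\<Sum>a\<in>UNIV. p a * (ln (p a) - Lm a)) + ln T * ((\<Sum>a\<in>UNIV. p a) - 1)"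
      unfolding t1 t2 G by (simp add: sum_subtractf sum_distrib_left algebra_simps sum_distrib_right[symmetric])
    have "(\<Sum>a\<in>UNIV. p a * (ln (p a) - Lm a)) \<le> (\<Sum>a\<in>UNIV. p a * (ln (p a) - Lp a))"
    proof (rule sum_mono)
      fix a
      have "Lp a \<le> Lm a" unfolding Lp_def Lm_def by (rule key)
      then show "p a * (ln (p a) - Lm a) \<le> p a * (ln (p a) - Lp a)"
        using p0[of a] by (intro mult_left_mono) auto
    qed
    then show ?thesis unfolding L' R p1 by simp
  qed
  have dG: "trace_dual (channel \<rho>0 U) \<Gamma> = M" unfolding dual M_def ..
  show ?thesis
    unfolding Let_def Gam \<Gamma>_def[symmetric] dG gam unfolding RE trM
    using final by simp
qed

end
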